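(* Let $B',B''\subseteq\widetilde\Sigma^*\setminus\mathring\Sigma^+$ be bases in decomposed form, $B'$ with scaffold $sc'$ and fill $fl'$, $B''$ with scaffold $sc''$ and fill $fl''$. If $B'$ and $B''$ are concatenable, then $\mathcal{C}(B')\cdot\mathcal{C}(B'')=\mathcal{C}(B'\odot B'')$, where $B'\odot B''=(sc'\cdot sc'')\cup fl'\cup fl''$.
   Context: $\Sigma$ is a finite alphabet, $\mathring\Sigma=\{\mathring a\mid a\in\Sigma\}$ a disjoint ("dotted") copy, and $\widetilde\Sigma=\Sigma\cup\mathring\Sigma$. The map $dot:\widetilde\Sigma^*\to\mathring\Sigma^*$ replaces each letter $a\in\Sigma$ by $\mathring a$ and leaves dotted letters unchanged. The match operation $@$ on letters is: $a@\mathring a=\mathring a@a=a$, $\mathring a@\mathring a=\mathring a$ for $a\in\Sigma$, undefined otherwise. For words $w,w'\in\widetilde\Sigma^n$, $w@w'=(w(1)@w'(1))\cdots(w(n)@w'(n))$ if every letterwise match is defined ($\epsilon@\epsilon=\epsilon$); otherwise (including unequal lengths) undefined. For languages, $B_1@B_2=\{w_1@w_2\mid w_1\in B_1,w_2\in B_2, w_1@w_2\text{ defined}\}$. Define $B^{0@}=B$, $B^{i@}=B^{(i-1)@}@B$, $B^@=\bigcup_{i\ge0}B^{i@}$, and $\mathcal{C}(B)=B^@\cap\Sigma^*$. $B$ is unproductive if $\mathcal{C}(B)=\emptyset$; $(B_1,B_2)$ is unmatchable if $B_1@B_2=\emptyset$. A base $B\subseteq\widetilde\Sigma^*\setminus\mathring\Sigma^+$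 is in decomposed form with scaffold $sc$ and fill $fl$ if $B$ is the disjoint union of $sc$ and $fl$, $fl$ is unproductive and $(sc,sc)$ is unmatchable. Decomposed bases $B',B''$ (scaffolds $sc',sc''$, fills $fl',fl''$) are concatenable if $B'\odot B''=(sc'\cdot sc'')\cup fl'\cup fl''$ is in decomposed form with scaffold $sc'\cdot sc''$ and fill $fl'\cup fl''$, and for all $w',w''\in\widetilde\Sigma^+$, $y'\in sc'$, $y''\in sc''$: (i) [there exists $x'\in fl'$ with $w'=x'\cdot dot(y'')$ and $x'@y'$ defined] if and only if [$w'\in fl'$ and $w'@(y'y'')$ is defined]; (ii) [there exists $x''\in fl''$ with $w''=dot(y')\cdot x''$ and $x''@y''$ defined] if and only if [$w''\in fl''$ and $w''@(y'y'')$ is defined]. *)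

theory Defs
  imports Main
begin

text \<open>Extended alphabet: letters of Sigma (Plain a) and their dotted copies (Dot a).\<close>
datatype 'a xl = Plain 'a | Dot 'a

type_synonym 'a xword = "'a xl list"

fun dotl :: "'a xl \<Rightarrow> 'a xl" where
  "dotl (Plain a) = Dot a"
| "dotl (Dot a) = Dot a"

definition dot :: "'a xword \<Rightarrow> 'a xword" where
  "dot w = map dotl w"

fun lmatch :: "'a xl \<Rightarrow> 'a xl \<Rightarrow> 'a xl option" where
  "lmatch (Plain a) (Dot b) = (if a = b then Some (Plain a) else None)"
| "lmatch (Dot a) (Plain b) = (if a = b then Some (Plain a) else None)"
| "lmatch (Dot a) (Dot b) = (if a = b then Some (Dot a) else None)"
| "lmatch (Plain a) (Plain b) = None"

fun wmatch :: "'a xword \<Rightarrow> 'a xword \<Rightarrow> 'a xword option" where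
  "wmatch [] [] = Some []"
| "wmatch (x # xs) (y # ys) =
     (case lmatch x y of None \<Rightarrow> None
      | Some z \<Rightarrow> (case wmatch xs ys of None \<Rightarrow> None | Some zs \<Rightarrow> Some (z # zs)))"
| "wmatch (x # xs) [] = None"
| "wmatch [] (y # ys) = None"

definition match_defined :: "'a xword \<Rightarrow> 'a xword \<Rightarrow> bool" where
  "match_defined w w' \<longleftrightarrow> wmatch w w' \<noteq> None"

definition lang_match :: "'a xword set \<Rightarrow> 'a xword set \<Rightarrow> 'a xword set" where
  "lang_match B1 B2 = {w. \<exists>w1\<in>B1. \<exists>w2\<in>B2. wmatch w1 w2 = Some w}"

fun mpow :: "'a xword set \<Rightarrow> nat \<Rightarrow> 'a xword set" where
  "mpow B 0 = B"
| "mpow B (Suc i) = lang_match (mpow B i) B"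

definition mstar :: "'a xword set \<Rightarrow> 'a xword set" where
  "mstar B = (\<Union>i. mpow B i)"

definition plain_words :: "'a xword set" where
  "plain_words = {w. \<forall>x\<in>set w. \<exists>a. x = Plain a}"

definition dotted_plus :: "'a xword set" where
  "dotted_plus = {w. w \<noteq> [] \<and> (\<forall>x\<in>set w. \<exists>a. x = Dot a)}"

definition closure :: "'a xword set \<Rightarrow> 'a xword set" where
  "closure B = mstar B \<inter> plain_words"

definition unproductive :: "'a xword set \<Rightarrow> bool" where
  "unproductive B \<longleftrightarrow> closure B = {}"

definition unmatchable :: "'a xword set \<Rightarrow> 'a xword set \<Rightarrow> bool" where
  "unmatchable B1 B2 \<longleftrightarrow> lang_match B1 B2 = {}"

definition is_base :: "'a xword set \<Rightarrow> bool" where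
  "is_base B \<longleftrightarrow> B \<inter> dotted_plus = {}"

definition lconc :: "'a xword set \<Rightarrow> 'a xword set \<Rightarrow> 'a xword set" where
  "lconc A B = {u @ v | u v. u \<in> A \<and> v \<in> B}"

definition decomposed :: "'a xword set \<Rightarrow> 'a xword set \<Rightarrow> 'a xword set \<Rightarrow> bool" where
  "decomposed B sc fl \<longleftrightarrow> is_base B \<and> B = sc \<union> fl \<and> sc \<inter> fl = {}
      \<and> unproductive fl \<and> unmatchable sc sc"

definition odot :: "'a xword set \<Rightarrow> 'a xword set \<Rightarrow> 'a xword set \<Rightarrow> 'a xword set \<Rightarrow> 'a xword set" where
  "odot sc1 fl1 sc2 fl2 = lconc sc1 sc2 \<union> fl1 \<union> fl2"

definition concatenable ::
  "'a xword set \<Rightarrow> 'a xword set \<Rightarrow> 'a xword set \<Rightarrow> 'a xword set \<Rightarrow> 'a xword set \<Rightarrow> 'a xword set \<Rightarrow> bool" where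
  "concatenable B1 sc1 fl1 B2 sc2 fl2 \<longleftrightarrow>
     decomposed B1 sc1 fl1 \<and> decomposed B2 sc2 fl2 \<and>
     decomposed (odot sc1 fl1 sc2 fl2) (lconc sc1 sc2) (fl1 \<union> fl2) \<and>
     (\<forall>w1 w2 y1 y2. w1 \<noteq> [] \<and> w2 \<noteq> [] \<and> y1 \<in> sc1 \<and> y2 \<in> sc2 \<longrightarrow>
        ((\<exists>x1\<in>fl1. w1 = x1 @ dot y2 \<and> match_defined x1 y1) \<longleftrightarrow>
           (w1 \<in> fl1 \<and> match_defined w1 (y1 @ y2))) \<and>
        ((\<exists>x2\<in>fl2. w2 = dot y1 @ x2 \<and> match_defined x2 y2) \<longleftrightarrow>
           (w2 \<in> fl2 \<and> match_defined w2 (y1 @ y2))))"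

end

theory Submission
  imports Defs "HOL-Library.Multiset"
begin



fun ltr :: "'a xl \<Rightarrow> 'a" where "ltr (Plain a) = a" | "ltr (Dot a) = a"
fun isp :: "'a xl \<Rightarrow> bool" where "isp (Plain a) = True" | "isp (Dot a) = False"
definition mk :: "'a \<Rightarrow> bool \<Rightarrow> 'a xl" where "mk a b = (if b then Plain a else Dot a)"

lemma ltr_mk[simp]: "ltr (mk a b) = a" and isp_mk[simp]: "isp (mk a b) = b"
  by (auto simp: mk_def)

lemma xl_eq: "ltr x = ltr y \<Longrightarrow> isp x = isp y \<Longrightarrow> x = y"
  by (cases x; cases y; auto)

lemma lmatch_char: "lmatch x y = Some z \<longleftrightarrow> ltr x = ltr y \<and> \<not> (isp x \<and> isp y) \<and> z = mk (ltr x) (isp x \<or> isp y)"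
  by (cases x; cases y; auto simp: mk_def)

lemma lmatch_def': "lmatch x y \<noteq> None \<longleftrightarrow> ltr x = ltr y \<and> \<not> (isp x \<and> isp y)"
  by (cases x; cases y; auto)

lemma wmatch_char: "wmatch u v = Some w \<longleftrightarrow> length u = length v \<and> length w = length u \<and>
   (\<forall>i<length u. lmatch (u!i) (v!i) = Some (w!i))"
proof (induction u v arbitrary: w rule: wmatch.induct)
  case (2 x xs y ys)
  show ?case
  proof
    assume h: "wmatch (x # xs) (y # ys) = Some w"
    then obtain z zs where lz: "lmatch x y = Some z" and "wmatch xs ys = Some zs" "w = z # zs"
      by (auto split: option.splits)
    note IH = "2"[OF lz]
    then show "length (x # xs) = length (y # ys) \<and> length w = length (x # xs) \<and>
   (\<forall>i<length (x # xs). lmatch ((x # xs)!i) ((y # ys)!i) = Some (w!i))"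
      using lz IH[of zs] \<open>wmatch xs ys = Some zs\<close> \<open>w = z # zs\<close> by (auto simp: nth_Cons split: nat.splits)
  next
    assume h: "length (x # xs) = length (y # ys) \<and> length w = length (x # xs) \<and>
   (\<forall>i<length (x # xs). lmatch ((x # xs)!i) ((y # ys)!i) = Some (w!i))"
    then obtain z zs where w: "w = z # zs" by (cases w) auto
    have lz: "lmatch x y = Some z" using h w by force
    moreover have "wmatch xs ys = Some zs" using h w "2"[OF lz, of zs] by force
    ultimately show "wmatch (x # xs) (y # ys) = Some w" using w by simp
  qed
qed auto

lemma wmatch_def_char: "wmatch u v \<noteq> None \<longleftrightarrow> length u = length v \<and>
   (\<forall>i<length u. ltr (u!i) = ltr (v!i) \<and> \<not> (isp (u!i) \<and> isp (v!i)))"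
proof
  assume "wmatch u v \<noteq> None"
  then obtain w where "wmatch u v = Some w" by auto
  then show "length u = length v \<and>
   (\<forall>i<length u. ltr (u!i) = ltr (v!i) \<and> \<not> (isp (u!i) \<and> isp (v!i)))"
    unfolding wmatch_char lmatch_char by auto
next
  assume h: "length u = length v \<and>
   (\<forall>i<length u. ltr (u!i) = ltr (v!i) \<and> \<not> (isp (u!i) \<and> isp (v!i)))"
  define w where "w = map (\<lambda>i. mk (ltr (u!i)) (isp (u!i) \<or> isp (v!i))) [0..<length u]"
  have "wmatch u v = Some w" unfolding wmatch_char lmatch_char w_def using h by auto
  then show "wmatch u v \<noteq> None" by simp
qed

lemma md_char: "match_defined u v \<longleftrightarrow> length u = length v \<and>
   (\<forall>i<length u. ltr (u!i) = ltr (v!i) \<and> \<not> (isp (u!i) \<and> isp (v!i)))"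
  unfolding match_defined_def by (rule wmatch_def_char)

lemma md_sym: "match_defined u v \<Longrightarrow> match_defined v u"
  unfolding md_char by auto

fun foldm :: "'a xword list \<Rightarrow> 'a xword option" where
  "foldm [] = None"
| "foldm [u] = Some u"
| "foldm (u # v # ws) = (case foldm (v # ws) of None \<Rightarrow> None | Some x \<Rightarrow> wmatch x u)"

definition col :: "'a xword list \<Rightarrow> nat \<Rightarrow> 'a xl list" where
  "col ws i = map (\<lambda>u. u!i) ws"

definition colok :: "'a xl list \<Rightarrow> 'a xl \<Rightarrow> bool" where
  "colok xs z \<longleftrightarrow> (\<forall>x\<in>set xs. ltr x = ltr z) \<and> length (filter isp xs) \<le> 1 \<and> (isp z \<longleftrightarrow> (\<exists>x\<in>set xs. isp x))"

definition MM :: "'a xword list \<Rightarrow> 'a xword \<Rightarrow> bool" where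
  "MM ws w \<longleftrightarrow> ws \<noteq> [] \<and> (\<forall>u\<in>set ws. length u = length w) \<and> (\<forall>i<length w. colok (col ws i) (w!i))"

lemma MM_single: "MM [u] w \<longleftrightarrow> u = w"
proof
  assume h: "MM [u] w"
  show "u = w"
  proof (rule nth_equalityI)
    show "length u = length w" using h by (auto simp: MM_def)
    fix i assume "i < length u"
    moreover have "length u = length w" using h by (auto simp: MM_def)
    ultimately show "u!i = w!i" using h by (intro xl_eq) (auto simp: MM_def col_def colok_def)
  qed
qed (auto simp: MM_def col_def colok_def)

lemma MM_Cons: assumes "ws \<noteq> []"
  shows "MM (u # ws) w \<longleftrightarrow> (\<exists>v. MM ws v \<and> wmatch v u = Some w)"
proof
  assume h: "MM (u # ws) w"
  define v where "v = map (\<lambda>i. mk (ltr (w!i)) (\<exists>x\<in>set (col ws i). isp x)) [0..<length w]"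
  have lv: "length v = length w" by (simp add: v_def)
  have vi: "v!i = mk (ltr (w!i)) (\<exists>x\<in>set (col ws i). isp x)" if "i < length w" for i
    using that by (simp add: v_def)
  have ci: "colok (u!i # col ws i) (w!i)" if "i < length w" for i
    using h that by (auto simp: MM_def col_def)
  have "MM ws v"
    unfolding MM_def
  proof (intro conjI ballI allI impI)
    show "ws \<noteq> []" by fact
    fix x assume "x \<in> set ws" then show "length x = length v" using h lv by (auto simp: MM_def)
  next
    fix i assume i: "i < length v"
    have c: "colok (u!i # col ws i) (w!i)" using ci i lv by simp
    have "length (filter isp (col ws i)) \<le> length (filter isp (u!i # col ws i))" by simp
    then show "colok (col ws i) (v ! i)" using c vi[of i] i lv unfolding colok_def by auto
  qed
  moreover have "wmatch v u = Some w"
    unfolding wmatch_char lmatch_char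
  proof (intro conjI allI impI)
    show "length v = length u" using lv h by (auto simp: MM_def)
    show "length w = length v" using lv by simp
    fix i assume i: "i < length v"
    have c: "colok (u!i # col ws i) (w!i)" using ci i lv by simp
    have lu: "ltr (u!i) = ltr (w!i)" using c by (simp add: colok_def)
    show "ltr (v!i) = ltr (u!i)" using i lv lu vi by simp
    show "\<not> (isp (v ! i) \<and> isp (u ! i))"
    proof
      assume a: "isp (v ! i) \<and> isp (u ! i)"
      then obtain x where "x \<in> set (col ws i)" "isp x" using vi i lv by auto
      then have "filter isp (col ws i) \<noteq> []" by (simp add: filter_empty_conv) blast
      then show False using c a by (simp add: colok_def)
    qed
    show "w ! i = mk (ltr (v ! i)) (isp (v ! i) \<or> isp (u ! i))"
      using c i lv vi by (intro xl_eq) (auto simp: colok_def)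
  qed
  ultimately show "\<exists>v. MM ws v \<and> wmatch v u = Some w" by blast
next
  assume "\<exists>v. MM ws v \<and> wmatch v u = Some w"
  then obtain v where mv: "MM ws v" and wm: "wmatch v u = Some w" by blast
  have l: "length v = length u" "length w = length v" and
    li: "\<And>i. i < length v \<Longrightarrow> ltr (v!i) = ltr (u!i) \<and> \<not> (isp (v!i) \<and> isp (u!i)) \<and> w!i = mk (ltr (v!i)) (isp (v!i) \<or> isp (u!i))"
    using wm unfolding wmatch_char lmatch_char by auto
  show "MM (u # ws) w"
    unfolding MM_def
  proof (intro conjI ballI allI impI)
    show "u # ws \<noteq> []" by simp
    fix x assume "x \<in> set (u # ws)"
    then show "length x = length w" using mv l by (auto simp: MM_def)
  next
    fix i assume i: "i < length w"
    have c: "colok (col ws i) (v!i)" using mv i l by (auto simp: MM_def)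
    have e: "isp (u!i) \<Longrightarrow> filter isp (col ws i) = []"
      using c li[of i] i l by (auto simp: colok_def filter_empty_conv)
    show "colok (col (u # ws) i) (w ! i)"
      using c li[of i] i l e by (auto simp: colok_def col_def)
  qed
qed

lemma foldm_MM: "foldm ws = Some w \<longleftrightarrow> MM ws w"
proof (induction ws arbitrary: w rule: foldm.induct)
  case 1 then show ?case by (simp add: MM_def)
next
  case (2 u) then show ?case by (simp add: MM_single)
next
  case (3 u v ws)
  have "foldm (u # v # ws) = Some w \<longleftrightarrow> (\<exists>x. foldm (v # ws) = Some x \<and> wmatch x u = Some w)"
    by (auto split: option.splits)
  also have "\<dots> \<longleftrightarrow> (\<exists>x. MM (v # ws) x \<and> wmatch x u = Some w)" using 3 by simp
  also have "\<dots> \<longleftrightarrow> MM (u # v # ws) w" using MM_Cons[of "v # ws" u w] by simp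
  finally show ?case .
qed

lemma mpow_char: "mpow B n = {w. \<exists>ws. length ws = Suc n \<and> set ws \<subseteq> B \<and> foldm ws = Some w}"
proof (induction n)
  case 0
  show ?case
  proof (auto, goal_cases)
    case (1 x) then show ?case by (intro exI[of _ "[x]"]) auto
  next
    case (2 x ws) then show ?case by (cases ws) auto
  qed
next
  case (Suc n)
  show ?case
  proof (intro set_eqI iffI)
    fix w assume "w \<in> mpow B (Suc n)"
    then obtain w1 w2 where a: "w1 \<in> mpow B n" "w2 \<in> B" "wmatch w1 w2 = Some w"
      by (auto simp: lang_match_def)
    then obtain ws where b: "length ws = Suc n" "set ws \<subseteq> B" "foldm ws = Some w1" using Suc by auto
    then obtain v vs where ws: "ws = v # vs" by (cases ws) auto
    have "length (w2 # ws) = Suc (Suc n) \<and> set (w2 # ws) \<subseteq> B \<and> foldm (w2 # ws) = Some w"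
      using a b ws by auto
    then show "w \<in> {w. \<exists>ws. length ws = Suc (Suc n) \<and> set ws \<subseteq> B \<and> foldm ws = Some w}" by blast
  next
    fix x assume "x \<in> {w. \<exists>ws. length ws = Suc (Suc n) \<and> set ws \<subseteq> B \<and> foldm ws = Some w}"
    then obtain ws where 2: "length ws = Suc (Suc n)" "set ws \<subseteq> B" "foldm ws = Some x" by auto
    then obtain u v vs where ws: "ws = u # v # vs" by (metis length_Suc_conv)
    define ws' where "ws' = v # vs"
    have ws': "ws' = v # vs" by (simp add: ws'_def)
    obtain x1 where f: "foldm ws' = Some x1" "wmatch x1 u = Some x" using 2 ws ws'
      by (auto split: option.splits)
    have "x1 \<in> mpow B n" using Suc 2 ws ws' f by auto
    then show "x \<in> mpow B (Suc n)" using 2 ws ws' f by (auto simp: lang_match_def)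
  qed
qed

lemma mstar_char: "w \<in> mstar B \<longleftrightarrow> (\<exists>ws. set ws \<subseteq> B \<and> MM ws w)"
proof -
  have "w \<in> mstar B \<longleftrightarrow> (\<exists>ws. set ws \<subseteq> B \<and> foldm ws = Some w)"
    unfolding mstar_def mpow_char
  proof safe
    fix ws assume a: "set ws \<subseteq> B" "foldm ws = Some w"
    then have "ws \<noteq> []" by auto
    then have "length ws = Suc (length ws - 1)" by simp
    then show "w \<in> (\<Union>n. {w. \<exists>ws. length ws = Suc n \<and> set ws \<subseteq> B \<and> foldm ws = Some w})"
      using a by blast
  qed blast
  then show ?thesis by (simp add: foldm_MM)
qed

lemma isp_iff: "isp x \<longleftrightarrow> (\<exists>a. x = Plain a)" by (cases x) auto

lemma plain_char: "w \<in> plain_words \<longleftrightarrow> (\<forall>i<length w. isp (w!i))"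
  unfolding plain_words_def
  by (simp add: isp_iff[symmetric] all_set_conv_all_nth)

lemma closure_char: "w \<in> closure B \<longleftrightarrow> (\<exists>ws. set ws \<subseteq> B \<and> MM ws w) \<and> (\<forall>i<length w. isp (w!i))"
  unfolding closure_def by (simp add: mstar_char plain_char)




lemma colok_sub:
  assumes "mset xs \<subseteq># mset ys" "colok ys z" "isp z \<longrightarrow> (\<exists>x\<in>set xs. isp x)"
  shows "colok xs z"
proof -
  have s: "set xs \<subseteq> set ys" using assms(1) by (metis set_mset_mset set_mset_mono)
  have "length (filter isp xs) \<le> length (filter isp ys)"
    using size_mset_mono[OF multiset_filter_mono[OF assms(1), of isp]]
    by (simp flip: mset_filter)
  then show ?thesis using assms s unfolding colok_def by auto
qed

lemma col_mset: "mset (col ws i) = image_mset (\<lambda>u. u!i) (mset ws)"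
  by (simp add: col_def)

lemma MM_sub:
  assumes "mset ws' \<subseteq># mset ws" "ws' \<noteq> []" "MM ws w"
    "\<forall>i<length w. isp (w!i) \<longrightarrow> (\<exists>u\<in>set ws'. isp (u!i))"
  shows "MM ws' w"
  unfolding MM_def
proof (intro conjI ballI allI impI)
  show "ws' \<noteq> []" by fact
  have s: "set ws' \<subseteq> set ws" using assms(1) by (metis set_mset_mset set_mset_mono)
  fix u assume "u \<in> set ws'" then show "length u = length w" using s assms(3) by (auto simp: MM_def)
next
  fix i assume i: "i < length w"
  have "mset (col ws' i) \<subseteq># mset (col ws i)" unfolding col_mset
    using assms(1) by (rule image_mset_subseteq_mono)
  moreover have "colok (col ws i) (w!i)" using assms(3) i by (auto simp: MM_def)
  moreover have "isp (w!i) \<longrightarrow> (\<exists>x\<in>set (col ws' i). isp x)" using assms(4) i by (auto simp: col_def)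
  ultimately show "colok (col ws' i) (w!i)" by (rule colok_sub)
qed

lemma MM_perm: assumes "mset ws' = mset ws" "MM ws w" shows "MM ws' w"
proof (rule MM_sub)
  show "mset ws' \<subseteq># mset ws" using assms by simp
  show "ws' \<noteq> []" using assms by (auto simp: MM_def)
  have s: "set ws' = set ws" using assms(1) by (metis set_mset_mset)
  show "\<forall>i<length w. isp (w!i) \<longrightarrow> (\<exists>u\<in>set ws'. isp (u!i))"
    using assms(2) unfolding s by (auto simp: MM_def colok_def col_def)
qed fact

lemma MM_add:
  assumes "MM ws w" "\<forall>v\<in>set ds. length v = length w \<and> (\<forall>i<length w. ltr (v!i) = ltr (w!i) \<and> \<not> isp (v!i))"
  shows "MM (ws @ ds) w"
  unfolding MM_def
proof (intro conjI ballI allI impI)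
  show "ws @ ds \<noteq> []" using assms by (auto simp: MM_def)
  fix u assume "u \<in> set (ws @ ds)" then show "length u = length w" using assms by (auto simp: MM_def)
next
  fix i assume i: "i < length w"
  have c: "colok (col ws i) (w!i)" using assms(1) i by (auto simp: MM_def)
  have "filter isp (col ds i) = []" using assms(2) i by (auto simp: col_def filter_empty_conv)
  then show "colok (col (ws @ ds) i) (w!i)" using c assms(2) i
    unfolding colok_def by (auto simp: col_def)
qed

lemma MM_pair:
  assumes "MM (a @ u # b) w" "v \<in> set (a @ b)"
  shows "match_defined u v"
  unfolding md_char
proof (intro conjI allI impI)
  have lu: "length u = length w" and lv: "length v = length w" using assms by (auto simp: MM_def)
  then show "length u = length v" by simp
  fix i assume i: "i < length u"
  have c: "colok (col (a @ u # b) i) (w!i)" using assms(1) i lu by (auto simp: MM_def)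
  then show "ltr (u!i) = ltr (v!i)" using assms(2) by (auto simp: colok_def col_def)
  show "\<not> (isp (u!i) \<and> isp (v!i))"
  proof
    assume h: "isp (u!i) \<and> isp (v!i)"
    have "filter isp (col (a @ b) i) \<noteq> []" using h assms(2) by (auto simp: col_def filter_empty_conv)
    then have "length (filter isp (col (a @ b) i)) \<ge> 1" by (simp add: Suc_leI)
    then have "length (filter isp (col (a @ u # b) i)) \<ge> 2" using h by (simp add: col_def)
    then show False using c by (simp add: colok_def)
  qed
qed

lemma MM_take: assumes "MM ws w" shows "MM (map (take n) ws) (take n w)"
  unfolding MM_def
proof (intro conjI ballI allI impI)
  show "map (take n) ws \<noteq> []" using assms by (auto simp: MM_def)
  fix u assume "u \<in> set (map (take n) ws)" then show "length u = length (take n w)" using assms by (auto simp: MM_def)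
next
  fix i assume i: "i < length (take n w)"
  have c: "colok (col ws i) (w!i)" using assms i by (auto simp: MM_def)
  have "col (map (take n) ws) i = col ws i" unfolding col_def using i by auto
  then show "colok (col (map (take n) ws) i) (take n w ! i)" using c i by simp
qed

lemma MM_drop: assumes "MM ws w" shows "MM (map (drop n) ws) (drop n w)"
  unfolding MM_def
proof (intro conjI ballI allI impI)
  show "map (drop n) ws \<noteq> []" using assms by (auto simp: MM_def)
  fix u assume "u \<in> set (map (drop n) ws)" then show "length u = length (drop n w)" using assms by (auto simp: MM_def)
next
  fix i assume i: "i < length (drop n w)"
  have c: "colok (col ws (n + i)) (w!(n + i))" using assms i by (auto simp: MM_def)
  have "col (map (drop n) ws) i = col ws (n + i)" unfolding col_def using i assms
    by (auto simp: MM_def)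
  then show "colok (col (map (drop n) ws) i) (drop n w ! i)" using c i by simp
qed

lemma map_zip_fst': "length G = length H \<Longrightarrow> map (\<lambda>(g, h). f g) (zip G H) = map f G"
  by (induction G H rule: list_induct2) auto
lemma map_zip_snd': "length G = length H \<Longrightarrow> map (\<lambda>(g, h). f h) (zip G H) = map f H"
  by (induction G H rule: list_induct2) auto

lemma MM_concat:
  assumes "MM G w1" "MM H w2" "length G = length H"
  shows "MM (map2 (@) G H) (w1 @ w2)"
  unfolding MM_def
proof (intro conjI ballI allI impI)
  show "map2 (@) G H \<noteq> []" using assms by (auto simp: MM_def)
  fix u assume "u \<in> set (map2 (@) G H)"
  then obtain g h where "(g, h) \<in> set (zip G H)" "u = g @ h" by auto
  then have "g \<in> set G" "h \<in> set H" by (auto dest: set_zip_leftD set_zip_rightD)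
  then show "length u = length (w1 @ w2)" using assms \<open>u = g @ h\<close> by (auto simp: MM_def)
next
  fix i assume i: "i < length (w1 @ w2)"
  show "colok (col (map2 (@) G H) i) ((w1 @ w2) ! i)"
  proof (cases "i < length w1")
    case True
    have "col (map2 (@) G H) i = map (\<lambda>(g, h). g ! i) (zip G H)"
      unfolding col_def using assms True
      by (auto simp: MM_def nth_append dest!: set_zip_leftD intro!: map_cong)
    also have "\<dots> = col G i" using assms(3)
      by (simp add: col_def map_zip_fst')
    finally show ?thesis using assms(1) True by (auto simp: MM_def nth_append)
  next
    case False
    have "col (map2 (@) G H) i = map (\<lambda>(g, h). h ! (i - length w1)) (zip G H)"
      unfolding col_def using assms False
      by (auto simp: MM_def nth_append dest!: set_zip_leftD intro!: map_cong)
    also have "\<dots> = col H (i - length w1)" using assms(3)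
      by (simp add: col_def map_zip_snd')
    finally show ?thesis using assms(2) False i by (auto simp: MM_def nth_append)
  qed
qed




lemma dot_len[simp]: "length (dot y) = length y" by (simp add: dot_def)
lemma dot_nth[simp]: "i < length y \<Longrightarrow> dot y ! i = dotl (y!i)" by (simp add: dot_def)
lemma ltr_dotl[simp]: "ltr (dotl x) = ltr x" by (cases x) auto
lemma isp_dotl[simp]: "isp (dotl x) = False" by (cases x) auto

lemma MM_len: "MM ws w \<Longrightarrow> u \<in> set ws \<Longrightarrow> length u = length w" by (auto simp: MM_def)
lemma MM_ltr: "MM ws w \<Longrightarrow> u \<in> set ws \<Longrightarrow> i < length w \<Longrightarrow> ltr (u!i) = ltr (w!i)"
  by (auto simp: MM_def colok_def col_def)
lemma MM_wit: "MM ws w \<Longrightarrow> i < length w \<Longrightarrow> isp (w!i) \<Longrightarrow> \<exists>u\<in>set ws. isp (u!i)"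
  by (auto simp: MM_def colok_def col_def)

lemma sc_ne: "unmatchable sc sc \<Longrightarrow> y \<in> sc \<Longrightarrow> y \<noteq> []"
  unfolding unmatchable_def lang_match_def by force

lemma get_sc:
  assumes "unproductive fl" "unmatchable sc sc" "set ws \<subseteq> sc \<union> fl" "MM ws w" "\<forall>i<length w. isp (w!i)"
  shows "\<exists>a y b. ws = a @ y # b \<and> y \<in> sc \<and> set (a @ b) \<subseteq> fl \<and> (\<forall>x\<in>set (a @ b). match_defined x y)"
proof -
  have "\<not> set ws \<subseteq> fl"
  proof
    assume "set ws \<subseteq> fl"
    then have "w \<in> closure fl" using assms by (auto simp: closure_char)
    then show False using assms(1) by (auto simp: unproductive_def)
  qed
  then obtain y where y: "y \<in> set ws" "y \<notin> fl" by auto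
  then have ysc: "y \<in> sc" using assms(3) by auto
  obtain a b where ws: "ws = a @ y # b" using y split_list by metis
  have md: "match_defined x y" if "x \<in> set (a @ b)" for x
    using MM_pair[of a y b w x] assms(4) ws that md_sym by auto
  have "x \<in> fl" if xin: "x \<in> set (a @ b)" for x
  proof (rule ccontr)
    assume "x \<notin> fl"
    then have "x \<in> sc" using that assms(3) ws by auto
    moreover obtain z where "wmatch x y = Some z" using md[OF xin] by (auto simp: match_defined_def)
    ultimately have "z \<in> lang_match sc sc" using ysc by (auto simp: lang_match_def)
    then show False using assms(2) by (auto simp: unmatchable_def)
  qed
  then show ?thesis using ws ysc md by blast
qed

lemma conc_i:
  assumes "concatenable B1 sc1 fl1 B2 sc2 fl2" "y1 \<in> sc1" "y2 \<in> sc2" "w' \<noteq> []"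
  shows "(\<exists>x1\<in>fl1. w' = x1 @ dot y2 \<and> match_defined x1 y1) \<longleftrightarrow> (w' \<in> fl1 \<and> match_defined w' (y1 @ y2))"
  using assms unfolding concatenable_def by blast

lemma conc_ii:
  assumes "concatenable B1 sc1 fl1 B2 sc2 fl2" "y1 \<in> sc1" "y2 \<in> sc2" "w' \<noteq> []"
  shows "(\<exists>x2\<in>fl2. w' = dot y1 @ x2 \<and> match_defined x2 y2) \<longleftrightarrow> (w' \<in> fl2 \<and> match_defined w' (y1 @ y2))"
  using assms unfolding concatenable_def by blast

lemma map2_rep_r: "map2 f xs (replicate (length xs) c) = map (\<lambda>x. f x c) xs"
  by (induction xs) auto
lemma map2_rep_l: "map2 f (replicate (length ys) c) ys = map (f c) ys"
  by (induction ys) auto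

lemma md_len: "match_defined u v \<Longrightarrow> length u = length v" by (simp add: md_char)




lemma dir1:
  assumes d1: "decomposed B1 sc1 fl1" and d2: "decomposed B2 sc2 fl2"
    and c: "concatenable B1 sc1 fl1 B2 sc2 fl2"
    and u: "u \<in> closure B1" and v: "v \<in> closure B2"
  shows "u @ v \<in> closure (odot sc1 fl1 sc2 fl2)"
proof -
  have B1: "B1 = sc1 \<union> fl1" and up1: "unproductive fl1" and um1: "unmatchable sc1 sc1"
    using d1 by (auto simp: decomposed_def)
  have B2: "B2 = sc2 \<union> fl2" and up2: "unproductive fl2" and um2: "unmatchable sc2 sc2"
    using d2 by (auto simp: decomposed_def)
  obtain ws1 where ws1: "set ws1 \<subseteq> B1" "MM ws1 u" and pu: "\<forall>i<length u. isp (u!i)"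
    using u by (auto simp: closure_char)
  obtain ws2 where ws2: "set ws2 \<subseteq> B2" "MM ws2 v" and pv: "\<forall>i<length v. isp (v!i)"
    using v by (auto simp: closure_char)
  obtain a1 y1 b1 where s1: "ws1 = a1 @ y1 # b1" "y1 \<in> sc1" "set (a1 @ b1) \<subseteq> fl1"
      "\<forall>x\<in>set (a1 @ b1). match_defined x y1"
    using get_sc[OF up1 um1 _ ws1(2) pu] ws1(1) B1 by blast
  obtain a2 y2 b2 where s2: "ws2 = a2 @ y2 # b2" "y2 \<in> sc2" "set (a2 @ b2) \<subseteq> fl2"
      "\<forall>x\<in>set (a2 @ b2). match_defined x y2"
    using get_sc[OF up2 um2 _ ws2(2) pv] ws2(1) B2 by blast
  define R1 where "R1 = a1 @ b1"
  define R2 where "R2 = a2 @ b2"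
  define G where "G = (y1 # R1) @ replicate (length R2) (dot y1)"
  define H where "H = (y2 # replicate (length R1) (dot y2)) @ R2"
  have y1u: "length y1 = length u" using MM_len[OF ws1(2)] s1 by auto
  have y2v: "length y2 = length v" using MM_len[OF ws2(2)] s2 by auto
  have y1ne: "y1 \<noteq> []" using sc_ne[OF um1 s1(2)] .
  have y2ne: "y2 \<noteq> []" using sc_ne[OF um2 s2(2)] .
  have d2ne: "dot y2 \<noteq> []" and d1ne: "dot y1 \<noteq> []" using y1ne y2ne
    by (metis dot_len length_0_conv)+
  have "MM (y1 # R1) u" using MM_perm[OF _ ws1(2)] s1(1) unfolding R1_def by simp
  then have mG: "MM G u" unfolding G_def
    using MM_ltr[OF ws1(2), of y1] s1(1) y1u by (intro MM_add) auto
  have "MM (y2 # R2) v" using MM_perm[OF _ ws2(2)] s2(1) unfolding R2_def by simp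
  then have "MM ((y2 # R2) @ replicate (length R1) (dot y2)) v"
    using MM_ltr[OF ws2(2), of y2] s2(1) y2v by (intro MM_add) auto
  then have mH: "MM H v" unfolding H_def by (rule MM_perm[rotated]) simp
  have lGH: "length G = length H" by (simp add: G_def H_def)
  have m: "MM (map2 (@) G H) (u @ v)" by (rule MM_concat[OF mG mH lGH])
  have eq: "map2 (@) G H = (y1 @ y2) # map (\<lambda>x. x @ dot y2) R1 @ map (\<lambda>x. dot y1 @ x) R2"
    unfolding G_def H_def by (simp add: map2_rep_r map2_rep_l)
  have sub: "set (map2 (@) G H) \<subseteq> odot sc1 fl1 sc2 fl2"
  proof -
    have "y1 @ y2 \<in> lconc sc1 sc2" using s1 s2 by (auto simp: lconc_def)
    moreover have "x @ dot y2 \<in> fl1" if "x \<in> set R1" for x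
      using conc_i[OF c s1(2) s2(2), of "x @ dot y2"] that s1 d2ne unfolding R1_def by auto
    moreover have "dot y1 @ x \<in> fl2" if "x \<in> set R2" for x
      using conc_ii[OF c s1(2) s2(2), of "dot y1 @ x"] that s2 d1ne unfolding R2_def by auto
    ultimately show ?thesis unfolding eq odot_def by auto
  qed
  have "\<forall>i<length (u @ v). isp ((u @ v)!i)" using pu pv by (auto simp: nth_append)
  then show ?thesis unfolding closure_char
    using m sub by blast
qed




lemma dir2:
  assumes d1: "decomposed B1 sc1 fl1" and d2: "decomposed B2 sc2 fl2"
    and c: "concatenable B1 sc1 fl1 B2 sc2 fl2"
    and w: "w \<in> closure (odot sc1 fl1 sc2 fl2)"
  shows "w \<in> lconc (closure B1) (closure B2)"
proof -
  have B1: "B1 = sc1 \<union> fl1" and um1: "unmatchable sc1 sc1"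
    using d1 by (auto simp: decomposed_def)
  have B2: "B2 = sc2 \<union> fl2" and um2: "unmatchable sc2 sc2"
    using d2 by (auto simp: decomposed_def)
  have dO: "decomposed (odot sc1 fl1 sc2 fl2) (lconc sc1 sc2) (fl1 \<union> fl2)"
    using c by (simp add: concatenable_def)
  have upO: "unproductive (fl1 \<union> fl2)" and umO: "unmatchable (lconc sc1 sc2) (lconc sc1 sc2)"
    and oO: "odot sc1 fl1 sc2 fl2 = lconc sc1 sc2 \<union> (fl1 \<union> fl2)"
    using dO by (auto simp: decomposed_def)
  obtain ws where ws: "set ws \<subseteq> odot sc1 fl1 sc2 fl2" "MM ws w" and pw: "\<forall>i<length w. isp (w!i)"
    using w by (auto simp: closure_char)
  obtain a y b where s: "ws = a @ y # b" "y \<in> lconc sc1 sc2" "set (a @ b) \<subseteq> fl1 \<union> fl2"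
      "\<forall>x\<in>set (a @ b). match_defined x y"
    using get_sc[OF upO umO _ ws(2) pw] ws(1) oO by blast
  obtain y1 y2 where y: "y = y1 @ y2" "y1 \<in> sc1" "y2 \<in> sc2" using s(2) by (auto simp: lconc_def)
  define R where "R = a @ b"
  define n where "n = length y1"
  have yw: "length y = length w" using MM_len[OF ws(2)] s(1) by auto
  have y1ne: "y1 \<noteq> []" using sc_ne[OF um1 y(2)] .
  have xlen: "length x = length w" if "x \<in> set R" for x using MM_len[OF ws(2)] s(1) that R_def by auto
  have F1: "\<exists>x1\<in>fl1. x = x1 @ dot y2 \<and> match_defined x1 y1" if "x \<in> set R" "x \<in> fl1" for x
  proof -
    have "x \<noteq> []" using xlen[OF that(1)] yw y y1ne by auto
    then show ?thesis using conc_i[OF c y(2) y(3), of x] that s(4) y R_def by auto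
  qed
  have F2: "\<exists>x2\<in>fl2. x = dot y1 @ x2 \<and> match_defined x2 y2" if "x \<in> set R" "x \<notin> fl1" for x
  proof -
    have "x \<noteq> []" using xlen[OF that(1)] yw y y1ne by auto
    moreover have "x \<in> fl2" using that s(3) R_def by auto
    ultimately show ?thesis using conc_ii[OF c y(2) y(3), of x] that s(4) y R_def by auto
  qed
  have nw: "n \<le> length w" using yw y n_def by simp
  define L1 where "L1 = y # filter (\<lambda>z. z \<in> fl1) R"
  define L2 where "L2 = y # filter (\<lambda>z. z \<notin> fl1) R"
  have subL1: "mset L1 \<subseteq># mset ws" unfolding L1_def s(1) R_def
    using multiset_filter_subset[of "\<lambda>z. z \<in> fl1" "mset (a @ b)"]
    by (simp add: add.commute add.left_commute subset_mset.add_mono mset_filter[symmetric] del: mset_filter)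
  have subL2: "mset L2 \<subseteq># mset ws" unfolding L2_def s(1) R_def
    using multiset_filter_subset[of "\<lambda>z. z \<notin> fl1" "mset (a @ b)"]
    by (simp add: add.commute add.left_commute subset_mset.add_mono mset_filter[symmetric] del: mset_filter)
  have m1: "MM (map (take n) L1) (take n w)"
  proof (rule MM_sub[OF _ _ MM_take[OF ws(2)]])
    show "mset (map (take n) L1) \<subseteq># mset (map (take n) ws)"
      using image_mset_subseteq_mono[OF subL1] by simp
    show "map (take n) L1 \<noteq> []" by (simp add: L1_def)
    show "\<forall>i<length (take n w). isp (take n w ! i) \<longrightarrow> (\<exists>u\<in>set (map (take n) L1). isp (u ! i))"
    proof (intro allI impI)
      fix i assume i: "i < length (take n w)" and p: "isp (take n w ! i)"
      have iw: "i < length w" "i < n" using i by auto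
      obtain u where u: "u \<in> set ws" "isp (u!i)" using MM_wit[OF ws(2) iw(1)] p iw by auto
      have "u \<in> set L1"
      proof (cases "u = y")
        case False
        then have uR: "u \<in> set R" using u s(1) R_def by auto
        show ?thesis
        proof (cases "u \<in> fl1")
          case False
          then obtain x2 where "u = dot y1 @ x2" using F2[OF uR] by auto
          then have "\<not> isp (u!i)" using iw n_def by (simp add: nth_append)
          then show ?thesis using u by simp
        qed (use uR L1_def in auto)
      qed (simp add: L1_def)
      then show "\<exists>u\<in>set (map (take n) L1). isp (u ! i)" using u iw by force
    qed
  qed
  have t1: "take n w \<in> closure B1"
  proof -
    have "set (map (take n) L1) \<subseteq> B1"
    proof
      fix z assume "z \<in> set (map (take n) L1)"
      then obtain x where x: "x \<in> set L1" "z = take n x" by auto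
      show "z \<in> B1"
      proof (cases "x = y")
        case True then show ?thesis using x y B1 n_def by simp
      next
        case False
        then have "x \<in> set R" "x \<in> fl1" using x L1_def by auto
        then obtain x1 where "x1 \<in> fl1" "x = x1 @ dot y2" "match_defined x1 y1" using F1 by blast
        then show ?thesis using x B1 n_def md_len by fastforce
      qed
    qed
    moreover have "\<forall>i<length (take n w). isp (take n w ! i)" using pw by auto
    ultimately show ?thesis using m1 unfolding closure_char by blast
  qed
  have m2: "MM (map (drop n) L2) (drop n w)"
  proof (rule MM_sub[OF _ _ MM_drop[OF ws(2)]])
    show "mset (map (drop n) L2) \<subseteq># mset (map (drop n) ws)"
      using image_mset_subseteq_mono[OF subL2] by simp
    show "map (drop n) L2 \<noteq> []" by (simp add: L2_def)
    show "\<forall>i<length (drop n w). isp (drop n w ! i) \<longrightarrow> (\<exists>u\<in>set (map (drop n) L2). isp (u ! i))"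
    proof (intro allI impI)
      fix i assume i: "i < length (drop n w)" and p: "isp (drop n w ! i)"
      have iw: "n + i < length w" using i by auto
      obtain u where u: "u \<in> set ws" "isp (u!(n + i))" using MM_wit[OF ws(2) iw] p nw by auto
      have ul: "length u = length w" using MM_len[OF ws(2) u(1)] .
      have "u \<in> set L2"
      proof (cases "u = y")
        case False
        then have uR: "u \<in> set R" using u s(1) R_def by auto
        show ?thesis
        proof (cases "u \<in> fl1")
          case True
          then obtain x1 where "u = x1 @ dot y2" "match_defined x1 y1" using F1[OF uR] by auto
          then have "\<not> isp (u!(n + i))" using iw n_def ul md_len[of x1 y1] by (auto simp: nth_append)
          then show ?thesis using u by simp
        qed (use uR L2_def in auto)
      qed (simp add: L2_def)
      then show "\<exists>u\<in>set (map (drop n) L2). isp (u ! i)" using u iw ul by force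
    qed
  qed
  have t2: "drop n w \<in> closure B2"
  proof -
    have "set (map (drop n) L2) \<subseteq> B2"
    proof
      fix z assume "z \<in> set (map (drop n) L2)"
      then obtain x where x: "x \<in> set L2" "z = drop n x" by auto
      show "z \<in> B2"
      proof (cases "x = y")
        case True then show ?thesis using x y B2 n_def by simp
      next
        case False
        then have "x \<in> set R" "x \<notin> fl1" using x L2_def by auto
        then obtain x2 where "x2 \<in> fl2" "x = dot y1 @ x2" using F2 by blast
        then show ?thesis using x B2 n_def by simp
      qed
    qed
    moreover have "\<forall>i<length (drop n w). isp (drop n w ! i)" using pw by auto
    ultimately show ?thesis using m2 unfolding closure_char by blast
  qed
  have "w = take n w @ drop n w" by simp
  then show ?thesis using t1 t2 unfolding lconc_def by blast
qed


theorem theorem2: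
  fixes B1 B2 sc1 fl1 sc2 fl2 :: "('a::finite) xword set"
  assumes "decomposed B1 sc1 fl1"
    and "decomposed B2 sc2 fl2"
    and "concatenable B1 sc1 fl1 B2 sc2 fl2"
  shows "lconc (closure B1) (closure B2) = closure (odot sc1 fl1 sc2 fl2)"
proof
  show "lconc (closure B1) (closure B2) \<subseteq> closure (odot sc1 fl1 sc2 fl2)"
    using dir1[OF assms] by (auto simp: lconc_def)
  show "closure (odot sc1 fl1 sc2 fl2) \<subseteq> lconc (closure B1) (closure B2)"
    using dir2[OF assms] by blast
qed

end
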